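(* Let $k\ge 1$ and $n\ge 3$ be integers, let $\alpha<0$ be a real number, and let $G\in T_k(n)$. Then \[{}^0R_{\alpha}(G)\ge k(n-1)^{\alpha}+2(k+1)^{\alpha}+(n-k-2)(k+2)^{\alpha},\] and equality holds if and only if $G=K_k+P_{n-k}$.
   Context: All graphs are finite, simple, undirected and connected. For a graph $G$ and real $\alpha\neq 0$, the zeroth-order general Randić index is ${}^0R_{\alpha}(G)=\sum_{v\in V(G)}d(v)^{\alpha}$, where $d(v)$ is the degree of $v$. A connected graph $G$ is a $k$-generalized quasi tree if there is a subset $V_k\subset V(G)$ with $|V_k|=k$ such that $G-V_k$ is a tree, but for every subset $V_{k-1}\subset V(G)$ with $|V_{k-1}|=k-1$, $G-V_{k-1}$ is not a tree; the vertices of such a $V_k$ are called quasi vertices. $T_k(n)$ denotes the class of $k$-generalized quasi trees of order $n$. For vertex-disjoint graphs $G,H$, the join $G+H$ has vertex set $V(G)\cup V(H)$ and edge set $E(G)\cup E(H)\cup\{uv: u\in V(G), v\in V(H)\}$. $K_k$ is the complete graph on $k$ vertices and $P_m$ is the path on $m$ vertices. *)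

theory Defs
  imports Complex_Main
begin

type_synonym 'a graph = "'a set \<times> 'a set set"

definition verts :: "'a graph \<Rightarrow> 'a set" where "verts G = fst G"
definition edges :: "'a graph \<Rightarrow> 'a set set" where "edges G = snd G"

definition simple_graph :: "'a graph \<Rightarrow> bool" where
  "simple_graph G \<longleftrightarrow> finite (verts G) \<and>
     (\<forall>e\<in>edges G. \<exists>u v. u \<noteq> v \<and> u \<in> verts G \<and> v \<in> verts G \<and> e = {u, v})"

definition adj :: "'a graph \<Rightarrow> 'a \<Rightarrow> 'a \<Rightarrow> bool" where
  "adj G u v \<longleftrightarrow> {u, v} \<in> edges G"

definition degree :: "'a graph \<Rightarrow> 'a \<Rightarrow> nat" where
  "degree G v = card {u \<in> verts G. adj G u v}"

definition connected_graph :: "'a graph \<Rightarrow> bool" where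
  "connected_graph G \<longleftrightarrow> simple_graph G \<and> verts G \<noteq> {} \<and>
     (\<forall>u\<in>verts G. \<forall>v\<in>verts G. (adj G)\<^sup>*\<^sup>* u v)"

definition is_cycle :: "'a graph \<Rightarrow> 'a list \<Rightarrow> bool" where
  "is_cycle G cs \<longleftrightarrow> length cs \<ge> 3 \<and> distinct cs \<and> set cs \<subseteq> verts G \<and>
     (\<forall>i. Suc i < length cs \<longrightarrow> adj G (cs ! i) (cs ! Suc i)) \<and>
     adj G (last cs) (hd cs)"

definition acyclic_graph :: "'a graph \<Rightarrow> bool" where
  "acyclic_graph G \<longleftrightarrow> (\<nexists>cs. is_cycle G cs)"

definition is_tree :: "'a graph \<Rightarrow> bool" where
  "is_tree G \<longleftrightarrow> connected_graph G \<and> acyclic_graph G"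

definition del_verts :: "'a graph \<Rightarrow> 'a set \<Rightarrow> 'a graph" where
  "del_verts G S = (verts G - S, {e \<in> edges G. e \<inter> S = {}})"

definition quasi_tree :: "nat \<Rightarrow> 'a graph \<Rightarrow> bool" where
  "quasi_tree k G \<longleftrightarrow> connected_graph G \<and>
     (\<exists>S. S \<subset> verts G \<and> card S = k \<and> is_tree (del_verts G S)) \<and>
     (\<forall>S. S \<subset> verts G \<and> card S = k - 1 \<longrightarrow> \<not> is_tree (del_verts G S))"

definition T_class :: "nat \<Rightarrow> nat \<Rightarrow> 'a graph set" where
  "T_class k n = {G. quasi_tree k G \<and> card (verts G) = n}"

definition randic0 :: "real \<Rightarrow> 'a graph \<Rightarrow> real" where
  "randic0 \<alpha> G = (\<Sum>v\<in>verts G. real (degree G v) powr \<alpha>)"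

definition graph_iso :: "'a graph \<Rightarrow> 'b graph \<Rightarrow> bool" where
  "graph_iso G H \<longleftrightarrow> (\<exists>f. bij_betw f (verts G) (verts H) \<and>
     (\<forall>u\<in>verts G. \<forall>v\<in>verts G. adj G u v \<longleftrightarrow> adj H (f u) (f v)))"

definition complete_graph :: "nat \<Rightarrow> nat graph" where
  "complete_graph k = ({0..<k}, {{i, j} | i j. i < k \<and> j < k \<and> i \<noteq> j})"

definition path_graph :: "nat \<Rightarrow> nat graph" where
  "path_graph m = ({0..<m}, {{i, Suc i} | i. Suc i < m})"

definition graph_join :: "'a graph \<Rightarrow> 'b graph \<Rightarrow> ('a + 'b) graph" where
  "graph_join G H = (Inl ` verts G \<union> Inr ` verts H,
     ((`) Inl) ` edges G \<union> ((`) Inr) ` edges H \<union>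
     {{Inl u, Inr v} | u v. u \<in> verts G \<and> v \<in> verts H})"

end

theory Submission
  imports Defs
begin

lemma adj_sym: "adj G u v = adj G v u"
  unfolding adj_def by (simp add: insert_commute)

lemma simple_adj:
  assumes "simple_graph G" "adj G u v"
  shows "u \<in> verts G" "v \<in> verts G" "u \<noteq> v"
  using assms unfolding simple_graph_def adj_def
  by (auto simp: doubleton_eq_iff)

lemma simple_finite: "simple_graph G \<Longrightarrow> finite (verts G)"
  unfolding simple_graph_def by simp

definition nbr :: "'a graph \<Rightarrow> 'a \<Rightarrow> 'a set" where "nbr G v = {u \<in> verts G. adj G u v}"

lemma degree_nbr: "degree G v = card (nbr G v)"
  unfolding degree_def nbr_def by simp

lemma verts_del[simp]: "verts (del_verts G S) = verts G - S"
  unfolding del_verts_def verts_def by simp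

lemma adj_del: "adj (del_verts G S) u v \<longleftrightarrow> adj G u v \<and> u \<notin> S \<and> v \<notin> S"
  unfolding adj_def del_verts_def edges_def by auto

lemma simple_del: "simple_graph G \<Longrightarrow> simple_graph (del_verts G S)"
  unfolding simple_graph_def del_verts_def verts_def edges_def by fastforce

lemma acyclic_del: "acyclic_graph G \<Longrightarrow> acyclic_graph (del_verts G S)"
  unfolding acyclic_graph_def is_cycle_def by (auto simp: adj_del)

definition gpath :: "'a graph \<Rightarrow> 'a list \<Rightarrow> bool" where
  "gpath H ps \<longleftrightarrow> distinct ps \<and> set ps \<subseteq> verts H \<and>
     (\<forall>i. Suc i < length ps \<longrightarrow> adj H (ps!i) (ps!Suc i))"

lemma gpath_len: "simple_graph H \<Longrightarrow> gpath H ps \<Longrightarrow> length ps \<le> card (verts H)"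
  unfolding gpath_def by (metis card_mono distinct_card simple_finite)

lemma max_gpath:
  assumes "simple_graph H" "adj H a b"
  shows "\<exists>ps. gpath H ps \<and> 2 \<le> length ps \<and> (\<forall>qs. gpath H qs \<longrightarrow> length qs \<le> length ps)"
proof -
  have "gpath H [a,b]" using simple_adj[OF assms] unfolding gpath_def
    using assms(2) by (auto simp: less_Suc_eq)
  then have P: "gpath H [a,b] \<and> 2 \<le> length [a,b]" by simp
  have "\<forall>y. gpath H y \<and> 2 \<le> length y \<longrightarrow> length y < card (verts H) + 1"
    using gpath_len[OF assms(1)] by (simp add: less_Suc_eq_le)
  from ex_has_greatest_nat[OF P this] obtain ps where
    ps: "gpath H ps \<and> 2 \<le> length ps" "\<forall>y. gpath H y \<and> 2 \<le> length y \<longrightarrow> length y \<le> length ps" by blast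
  show ?thesis
    apply (rule exI[of _ ps]) using ps by (metis le_trans nat_le_linear)
qed

lemma gpath_snoc:
  assumes "gpath H ps" "ps \<noteq> []" "u \<notin> set ps" "u \<in> verts H" "adj H (last ps) u"
  shows "gpath H (ps @ [u])"
  unfolding gpath_def
proof (intro conjI allI impI)
  show "distinct (ps @ [u])" using assms unfolding gpath_def by simp
  show "set (ps @ [u]) \<subseteq> verts H" using assms unfolding gpath_def by simp
  fix i assume i: "Suc i < length (ps @ [u])"
  show "adj H ((ps @ [u]) ! i) ((ps @ [u]) ! Suc i)"
  proof (cases "Suc i < length ps")
    case True then show ?thesis using assms(1) unfolding gpath_def by (simp add: nth_append)
  next
    case False
    then have "i = length ps - 1" using i by simp
    then show ?thesis using assms(2,5) False by (simp add: nth_append last_conv_nth)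
  qed
qed

lemma gpath_cons:
  assumes "gpath H ps" "ps \<noteq> []" "u \<notin> set ps" "u \<in> verts H" "adj H u (hd ps)"
  shows "gpath H (u # ps)"
  unfolding gpath_def
proof (intro conjI allI impI)
  show "distinct (u # ps)" using assms unfolding gpath_def by simp
  show "set (u # ps) \<subseteq> verts H" using assms unfolding gpath_def by simp
  fix i assume i: "Suc i < length (u # ps)"
  show "adj H ((u # ps) ! i) ((u # ps) ! Suc i)"
  proof (cases i)
    case 0 then show ?thesis using assms(2,5) by (simp add: hd_conv_nth)
  next
    case (Suc j) then show ?thesis using assms(1) i unfolding gpath_def by simp
  qed
qed

lemma gpath_chord_cycle:
  assumes "gpath H ps" "i + 2 \<le> j" "j < length ps" "adj H (ps!j) (ps!i)"
  shows "is_cycle H (take (j - i + 1) (drop i ps))"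
proof -
  let ?cs = "take (j - i + 1) (drop i ps)"
  have len: "length ?cs = j - i + 1" using assms by simp
  have nth: "\<And>l. l < j - i + 1 \<Longrightarrow> ?cs ! l = ps ! (i + l)" using assms by simp
  show ?thesis unfolding is_cycle_def
  proof (intro conjI allI impI)
    show "3 \<le> length ?cs" using len assms by simp
    show "distinct ?cs" using assms(1) unfolding gpath_def by (simp add: distinct_take)
    show "set ?cs \<subseteq> verts H" using assms(1) unfolding gpath_def
      by (meson order.trans set_drop_subset set_take_subset)
    fix l assume l: "Suc l < length ?cs"
    then have "Suc (i + l) < length ps" using len assms by simp
    then show "adj H (?cs ! l) (?cs ! Suc l)" using assms(1) l len nth unfolding gpath_def
      by (metis Suc_lessD add_Suc_right)
  next
    have "last ?cs = ?cs ! (j - i)" using len by (metis last_conv_nth diff_Suc_1 list.size(3) nat.distinct(1) Suc_eq_plus1)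
    also have "\<dots> = ps ! j" using nth[of "j - i"] assms by simp
    finally have "last ?cs = ps ! j" .
    moreover have "hd ?cs = ps ! i" using len nth[of 0] by (simp add: hd_conv_nth)
    ultimately show "adj H (last ?cs) (hd ?cs)" using assms(4) by simp
  qed
qed

lemma nbr_finite: "simple_graph G \<Longrightarrow> finite (nbr G v)"
  by (rule finite_subset[of _ "verts G"]) (auto simp: nbr_def dest: simple_finite)

lemma nbr_self: "simple_graph G \<Longrightarrow> v \<notin> nbr G v"
  using simple_adj(3)[of G v v] unfolding nbr_def by blast

lemma leaf_exists:
  assumes "simple_graph H" "acyclic_graph H" "verts H \<noteq> {}"
  shows "\<exists>v\<in>verts H. degree H v \<le> 1"
proof (cases "\<exists>a b. adj H a b")
  case False
  obtain v where "v \<in> verts H" using assms(3) by blast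
  moreover have "nbr H v = {}" using False unfolding nbr_def by auto
  ultimately show ?thesis by (intro bexI[of _ v]) (simp_all add: degree_nbr)
next
  case True
  then obtain a b where ab: "adj H a b" by blast
  from max_gpath[OF assms(1) ab] obtain ps where ps: "gpath H ps" "2 \<le> length ps"
    "\<forall>qs. gpath H qs \<longrightarrow> length qs \<le> length ps" by blast
  let ?v = "last ps"
  have ne: "ps \<noteq> []" using ps by auto
  have vin: "?v \<in> verts H" using ps(1) ne unfolding gpath_def by auto
  have lastn: "?v = ps ! (length ps - 1)" using ne by (simp add: last_conv_nth)
  have sub: "nbr H ?v \<subseteq> {ps ! (length ps - 2)}"
  proof
    fix u assume u: "u \<in> nbr H ?v"
    then have uv: "adj H u ?v" "u \<in> verts H" unfolding nbr_def by auto
    have "u \<in> set ps"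
    proof (rule ccontr)
      assume "u \<notin> set ps"
      then have "gpath H (ps @ [u])" using gpath_snoc[OF ps(1) ne \<open>u \<notin> set ps\<close> uv(2)] uv(1) adj_sym[of H u "last ps"] by simp
      then show False using ps(3) by fastforce
    qed
    then obtain i where i: "i < length ps" "u = ps ! i" by (metis in_set_conv_nth)
    have "i \<noteq> length ps - 1"
    proof
      assume "i = length ps - 1"
      then have "u = last ps" using i(2) lastn by simp
      then show False using simple_adj(3)[OF assms(1) uv(1)] by simp
    qed
    moreover have "\<not> i + 2 \<le> length ps - 1"
    proof
      assume "i + 2 \<le> length ps - 1"
      then have "is_cycle H (take (length ps - 1 - i + 1) (drop i ps))"
        using gpath_chord_cycle[OF ps(1), of i "length ps - 1"] uv(1) lastn i ne adj_sym[of H u "last ps"] by simp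
      then show False using assms(2) unfolding acyclic_graph_def by blast
    qed
    ultimately have "i = length ps - 2" using i by linarith
    then show "u \<in> {ps ! (length ps - 2)}" using i by simp
  qed
  have "card (nbr H ?v) \<le> card {ps ! (length ps - 2)}" by (rule card_mono[OF _ sub]) simp
  then have "degree H ?v \<le> 1" by (simp add: degree_nbr)
  then show ?thesis using vin by blast
qed

lemma degree_sum_acyclic:
  assumes "simple_graph H" "acyclic_graph H" "verts H \<noteq> {}"
  shows "(\<Sum>v\<in>verts H. degree H v) + 2 \<le> 2 * card (verts H)"
  using assms
proof (induction "card (verts H)" arbitrary: H)
  case 0
  then have "finite (verts H)" using simple_finite[of H] by blast
  with 0 show ?case by simp
next
  case (Suc N)
  have fin: "finite (verts H)" using Suc.prems simple_finite[of H] by auto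
  obtain v where v: "v \<in> verts H" "degree H v \<le> 1" using leaf_exists[OF Suc.prems] by blast
  show ?case
  proof (cases "verts H = {v}")
    case True
    have "nbr H v \<subseteq> verts H" unfolding nbr_def by blast
    then have "nbr H v = {}" using True nbr_self[OF Suc.prems(1), of v] by auto
    then show ?thesis using True by (simp add: degree_nbr)
  next
    case False
    let ?H = "del_verts H {v}"
    have vH: "verts ?H = verts H - {v}" by simp
    have ne: "verts ?H \<noteq> {}" using False v by auto
    have cH: "N = card (verts ?H)" using Suc.hyps(2) v fin by simp
    have IH: "(\<Sum>u\<in>verts ?H. degree ?H u) + 2 \<le> 2 * card (verts ?H)"
      using Suc.hyps(1)[OF cH simple_del[OF Suc.prems(1)] acyclic_del[OF Suc.prems(2)] ne] .
    have nb: "nbr ?H u = nbr H u - {v}" if "u \<in> verts H - {v}" for u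
      using that unfolding nbr_def by (auto simp: adj_del)
    have dg: "degree H u = degree ?H u + (if v \<in> nbr H u then 1 else 0)" if "u \<in> verts H - {v}" for u
    proof -
      have f: "finite (nbr H u)" by (rule nbr_finite[OF Suc.prems(1)])
      show ?thesis
      proof (cases "v \<in> nbr H u")
        case True
        have "card (nbr H u) = Suc (card (nbr H u - {v}))" using f True by (rule card.remove)
        then show ?thesis using True unfolding degree_nbr nb[OF that] by simp
      next
        case False
        then have "nbr H u - {v} = nbr H u" by blast
        then show ?thesis using False unfolding degree_nbr nb[OF that] by simp
      qed
    qed
    have cnt: "(\<Sum>u\<in>verts H - {v}. (if v \<in> nbr H u then 1 else 0::nat)) = degree H v"
    proof -
      have "(\<Sum>u\<in>verts H - {v}. (if v \<in> nbr H u then 1 else 0::nat)) = card ((verts H - {v}) \<inter> {u. v \<in> nbr H u})"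
        using fin by (simp add: sum.If_cases)
      also have "(verts H - {v}) \<inter> {u. v \<in> nbr H u} = nbr H v"
        using nbr_self[OF Suc.prems(1), of v] v(1) adj_sym[of H v] unfolding nbr_def by blast
      finally show ?thesis by (simp add: degree_nbr)
    qed
    have "(\<Sum>u\<in>verts H. degree H u) = degree H v + (\<Sum>u\<in>verts H - {v}. degree H u)"
      by (rule sum.remove[OF fin v(1)])
    also have "(\<Sum>u\<in>verts H - {v}. degree H u) = (\<Sum>u\<in>verts H - {v}. degree ?H u + (if v \<in> nbr H u then 1 else 0))"
      by (rule sum.cong[OF refl]) (rule dg)
    also have "\<dots> = (\<Sum>u\<in>verts H - {v}. degree ?H u) + degree H v"
      by (simp only: sum.distrib cnt)
    finally have "(\<Sum>u\<in>verts H. degree H u) = (\<Sum>u\<in>verts ?H. degree ?H u) + 2 * degree H v" by simp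
    then show ?thesis using IH v(2) cH Suc.hyps(2) by linarith
  qed
qed

lemma conn_degree_pos:
  assumes "connected_graph H" "v \<in> verts H" "w \<in> verts H" "v \<noteq> w"
  shows "1 \<le> degree H v"
proof -
  have s: "simple_graph H" using assms(1) unfolding connected_graph_def by simp
  have "(adj H)\<^sup>*\<^sup>* v w" using assms unfolding connected_graph_def by blast
  then obtain y where "adj H v y" using assms(4) by (metis converse_rtranclpE)
  then have "adj H y v" "y \<in> verts H" using simple_adj[OF s] adj_sym[of H v y] by auto
  then have "y \<in> nbr H v" unfolding nbr_def by blast
  then show ?thesis unfolding degree_nbr using nbr_finite[OF s]
    by (metis One_nat_def Suc_leI card_gt_0_iff empty_iff)
qed

lemma rtranclp_cross:
  assumes "(adj H)\<^sup>*\<^sup>* a b" "a \<in> P" "b \<notin> P"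
  shows "\<exists>x y. x \<in> P \<and> y \<notin> P \<and> adj H x y"
  using assms by (induction rule: rtranclp_induct) blast+

lemma path_cover:
  assumes "connected_graph H" "\<forall>v\<in>verts H. degree H v \<le> 2" "gpath H ps" "2 \<le> length ps"
    "\<forall>qs. gpath H qs \<longrightarrow> length qs \<le> length ps"
  shows "set ps = verts H"
proof (rule ccontr)
  have s: "simple_graph H" using assms(1) unfolding connected_graph_def by simp
  have sub: "set ps \<subseteq> verts H" using assms(3) unfolding gpath_def by simp
  assume "set ps \<noteq> verts H"
  then obtain w where w: "w \<in> verts H" "w \<notin> set ps" using sub by blast
  have ne: "ps \<noteq> []" using assms(4) by auto
  have "hd ps \<in> verts H" using sub ne by auto
  then have "(adj H)\<^sup>*\<^sup>* (hd ps) w" using w assms(1) unfolding connected_graph_def by blast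
  then obtain x y where xy: "x \<in> set ps" "y \<notin> set ps" "adj H x y"
    using rtranclp_cross[of H "hd ps" w "set ps"] w ne by auto
  have yv: "y \<in> verts H" using simple_adj[OF s xy(3)] by simp
  obtain i where i: "i < length ps" "x = ps ! i" using xy(1) by (metis in_set_conv_nth)
  have "i \<noteq> length ps - 1"
  proof
    assume "i = length ps - 1"
    then have "x = last ps" using i ne by (simp add: last_conv_nth)
    then have "gpath H (ps @ [y])" using gpath_snoc[OF assms(3) ne xy(2) yv] xy(3) by simp
    then show False using assms(5) by fastforce
  qed
  moreover have "i \<noteq> 0"
  proof
    assume "i = 0"
    then have "x = hd ps" using i ne by (simp add: hd_conv_nth)
    then have "gpath H (y # ps)" using gpath_cons[OF assms(3) ne xy(2) yv] xy(3) adj_sym[of H x y] by simp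
    then show False using assms(5) by fastforce
  qed
  ultimately have i2: "0 < i" "Suc i < length ps" using i by auto
  have si: "Suc (i - 1) = i" using i2 by simp
  have a1: "adj H (ps ! (i - 1)) x" using assms(3) i i2 si unfolding gpath_def
    by (metis less_SucI)
  have "adj H (ps ! i) (ps ! Suc i)" using assms(3) i2 unfolding gpath_def by blast
  then have a2: "adj H (ps ! Suc i) x" using i(2) adj_sym[of H x "ps ! Suc i"] by simp
  have a3: "adj H y x" using xy(3) adj_sym[of H x y] by simp
  have m1: "ps ! (i - 1) \<in> verts H" "ps ! Suc i \<in> verts H" using sub i2 by (auto simp: nth_mem)
  have d: "ps ! (i - 1) \<noteq> ps ! Suc i" using assms(3) i2 unfolding gpath_def
    by (simp add: nth_eq_iff_index_eq)
  have y1: "y \<noteq> ps ! (i - 1)" "y \<noteq> ps ! Suc i" using xy(2) i2 by (auto simp: nth_mem)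
  have "{ps ! (i - 1), ps ! Suc i, y} \<subseteq> nbr H x"
    using a1 a2 a3 m1 yv unfolding nbr_def by blast
  then have "card {ps ! (i - 1), ps ! Suc i, y} \<le> degree H x"
    unfolding degree_nbr by (intro card_mono nbr_finite s)
  moreover have "card {ps ! (i - 1), ps ! Suc i, y} = 3" using d y1 by auto
  moreover have "degree H x \<le> 2" using assms(2) sub xy(1) by blast
  ultimately show False by simp
qed

lemma gpath_adj_iff:
  assumes "simple_graph H" "acyclic_graph H" "gpath H ps" "i < length ps" "j < length ps"
  shows "adj H (ps!i) (ps!j) \<longleftrightarrow> (Suc i = j \<or> Suc j = i)"
proof
  assume a: "adj H (ps!i) (ps!j)"
  have "i \<noteq> j" using simple_adj[OF assms(1) a] by auto
  moreover have "\<not> i + 2 \<le> j"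
  proof
    assume "i + 2 \<le> j"
    then have "is_cycle H (take (j - i + 1) (drop i ps))"
      using gpath_chord_cycle[OF assms(3) _ assms(5)] a adj_sym[of H "ps!i" "ps!j"] by simp
    then show False using assms(2) unfolding acyclic_graph_def by blast
  qed
  moreover have "\<not> j + 2 \<le> i"
  proof
    assume "j + 2 \<le> i"
    then have "is_cycle H (take (i - j + 1) (drop j ps))"
      using gpath_chord_cycle[OF assms(3) _ assms(4)] a by simp
    then show False using assms(2) unfolding acyclic_graph_def by blast
  qed
  ultimately show "Suc i = j \<or> Suc j = i" by linarith
next
  assume "Suc i = j \<or> Suc j = i"
  note h = this
  have g: "\<forall>l. Suc l < length ps \<longrightarrow> adj H (ps!l) (ps!Suc l)" using assms(3) unfolding gpath_def by blast
  show "adj H (ps!i) (ps!j)" using h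
  proof
    assume "Suc i = j" then show ?thesis using g assms(5) by blast
  next
    assume "Suc j = i" then have "adj H (ps!j) (ps!i)" using g assms(4) by blast
    then show ?thesis using adj_sym[of H "ps!j" "ps!i"] by simp
  qed
qed

lemma powr_strict_conv:
  fixes a x :: real
  assumes "a < 0" "0 < x"
  shows "2 * (x + 1) powr a < x powr a + (x + 2) powr a"
proof -
  let ?p = "x powr (a/2)" and ?q = "(x+2) powr (a/2)"
  have "x powr a = ?p^2" using assms by (simp add: powr_powr[symmetric] power2_eq_square powr_add[symmetric])
  moreover have "(x+2) powr a = ?q^2" using assms by (simp add: power2_eq_square powr_add[symmetric])
  moreover have "?p * ?q = (x * (x+2)) powr (a/2)" using assms by (simp add: powr_mult)
  moreover have "(x * (x+2)) powr (a/2) > ((x+1) * (x+1)) powr (a/2)"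
  proof (rule powr_less_mono2_neg)
    show "a / 2 < 0" using assms by simp
    show "0 < x * (x + 2)" using assms by simp
    show "x * (x + 2) < (x + 1) * (x + 1)" by (simp add: algebra_simps)
  qed
  moreover have "((x+1) * (x+1)) powr (a/2) = (x+1) powr a"
    using assms by (simp add: powr_mult powr_add[symmetric])
  moreover have "2 * (?p * ?q) \<le> ?p^2 + ?q^2" using sum_squares_bound[of ?p ?q]
    by (simp add: mult.assoc)
  ultimately show ?thesis by linarith
qed

lemma incr_gap:
  fixes a :: real and j :: nat
  assumes "a < 0" "0 < b" "2 \<le> j"
  shows "(b + real j + 1) powr a - (b + real j) powr a > (b + 2) powr a - (b + 1) powr a"
  using assms(3)
proof (induction j rule: nat_induct_at_least)
  case base
  have "2 * (b + 2) powr a < (b+1) powr a + (b + 3) powr a"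
    using powr_strict_conv[OF assms(1), of "b+1"] assms(2) by (simp add: add.assoc)
  then show ?case by (simp add: ac_simps)
next
  case (Suc j)
  have c: "2 * (b + real j + 1) powr a < (b + real j) powr a + (b + real j + 2) powr a"
    using powr_strict_conv[OF assms(1), of "b + real j"] assms(2) Suc.hyps by (simp add: add.assoc)
  have "(b + 2) powr a - (b + 1) powr a < (b + real j + 2) powr a - (b + real j + 1) powr a"
    using Suc.IH c by linarith
  then show ?case by (simp add: ac_simps)
qed

lemma secant_strict:
  fixes a :: real and d :: nat
  assumes "a < 0" "0 < b" "3 \<le> d"
  shows "(b + real d) powr a > (b + 2) powr a - (real d - 2) * ((b + 1) powr a - (b + 2) powr a)"
  using assms(3)
proof (induction d rule: nat_induct_at_least)
  case base
  have "2 * (b + 2) powr a < (b+1) powr a + (b + 3) powr a"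
    using powr_strict_conv[OF assms(1), of "b+1"] assms(2) by (simp add: add.assoc)
  then show ?case by simp
next
  case (Suc d)
  define C where "C = (b + 1) powr a - (b + 2) powr a"
  have g: "(b + real d + 1) powr a - (b + real d) powr a > (b + 2) powr a - (b + 1) powr a"
    using incr_gap[OF assms(1,2)] Suc.hyps by simp
  have IH: "(b + real d) powr a > (b + 2) powr a - (real d - 2) * C" using Suc.IH unfolding C_def .
  have e: "(real d - 1) * C = (real d - 2) * C + C" by (simp add: algebra_simps)
  have "(b + real d + 1) powr a > (b + 2) powr a - (real d - 1) * C"
    using g IH e unfolding C_def by linarith
  moreover have "b + real (Suc d) = b + real d + 1" "real (Suc d) - 2 = real d - 1" by simp_all
  ultimately show ?case unfolding C_def by (simp add: ac_simps)
qed

lemma secant: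
  fixes a :: real and d :: nat
  assumes "a < 0" "0 < b" "1 \<le> d"
  shows "(b + real d) powr a \<ge> (b + 2) powr a - (real d - 2) * ((b + 1) powr a - (b + 2) powr a)"
    and "(b + real d) powr a = (b + 2) powr a - (real d - 2) * ((b + 1) powr a - (b + 2) powr a)
         \<Longrightarrow> d \<le> 2"
proof -
  show "(b + real d) powr a \<ge> (b + 2) powr a - (real d - 2) * ((b + 1) powr a - (b + 2) powr a)"
  proof (cases "d \<le> 2")
    case True
    then have "d = 1 \<or> d = 2" using assms by auto
    then show ?thesis
    proof (elim disjE)
      assume "d = 1" then show ?thesis by simp
    next
      assume "d = 2" then show ?thesis by simp
    qed
  next
    case False
    then show ?thesis using secant_strict[OF assms(1,2), of d] by simp
  qed
  show "d \<le> 2" if "(b + real d) powr a = (b + 2) powr a - (real d - 2) * ((b + 1) powr a - (b + 2) powr a)"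
  proof (rule ccontr)
    assume "\<not> d \<le> 2"
    then have "3 \<le> d" by simp
    from secant_strict[OF assms(1,2) this] that show False by simp
  qed
qed

lemma verts_complete[simp]: "verts (complete_graph k) = {0..<k}"
  unfolding complete_graph_def verts_def by simp
lemma verts_path[simp]: "verts (path_graph m) = {0..<m}"
  unfolding path_graph_def verts_def by simp
lemma verts_join: "verts (graph_join A B) = Inl ` verts A \<union> Inr ` verts B"
  unfolding graph_join_def verts_def by simp

lemma adj_complete: "adj (complete_graph k) i j \<longleftrightarrow> i < k \<and> j < k \<and> i \<noteq> j"
  unfolding adj_def complete_graph_def edges_def by (auto simp: doubleton_eq_iff)

lemma adj_path: "adj (path_graph m) i j \<longleftrightarrow> (Suc i = j \<and> j < m) \<or> (Suc j = i \<and> i < m)"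
  unfolding adj_def path_graph_def edges_def by (auto simp: doubleton_eq_iff)

lemma edges_join: "edges (graph_join A B) = (`) Inl ` edges A \<union> (`) Inr ` edges B \<union>
     {{Inl u, Inr v} | u v. u \<in> verts A \<and> v \<in> verts B}"
  unfolding graph_join_def edges_def verts_def by simp

lemma adj_join_ll: "adj (graph_join A B) (Inl a) (Inl b) \<longleftrightarrow> adj A a b"
proof -
  have X: "({Inl a, Inl b} :: ('a + 'b) set) = Inl ` e \<longleftrightarrow> e = {a, b}" for e :: "'a set"
  proof -
    have "{Inl a, Inl b} = (Inl ` {a, b} :: ('a + 'b) set)" by simp
    moreover have "(Inl ` {a, b} :: ('a + 'b) set) = Inl ` e \<longleftrightarrow> {a, b} = e"
      by (rule inj_image_eq_iff) (simp add: inj_def)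
    ultimately show ?thesis by auto
  qed
  have Y: "{Inl a, Inl b} \<noteq> (Inr ` e :: ('a + 'b) set)" for e :: "'b set"
  proof
    assume h: "{Inl a, Inl b} = (Inr ` e :: ('a + 'b) set)"
    have "(Inl a :: 'a + 'b) \<in> Inr ` e" by (subst h[symmetric]) simp
    then show False by blast
  qed
  have Z: "{Inl a, Inl b} \<noteq> ({Inl u, Inr v} :: ('a + 'b) set)" for u v
  proof
    assume h: "{Inl a, Inl b} = ({Inl u, Inr v} :: ('a + 'b) set)"
    have "(Inr v :: 'a + 'b) \<in> {Inl a, Inl b}" by (subst h) simp
    then show False by simp
  qed
  have 1: "({Inl a, Inl b} :: ('a + 'b) set) \<in> (`) Inl ` edges A \<longleftrightarrow> {a, b} \<in> edges A"
  proof
    assume "({Inl a, Inl b} :: ('a + 'b) set) \<in> (`) Inl ` edges A"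
    then obtain e where "({Inl a, Inl b} :: ('a + 'b) set) = Inl ` e" "e \<in> edges A" by (rule imageE)
    then show "{a, b} \<in> edges A" using X by simp
  next
    assume "{a, b} \<in> edges A"
    moreover have "{Inl a, Inl b} = (Inl ` {a, b} :: ('a + 'b) set)" by simp
    ultimately show "({Inl a, Inl b} :: ('a + 'b) set) \<in> (`) Inl ` edges A" by (rule rev_image_eqI)
  qed
  have 2: "({Inl a, Inl b} :: ('a + 'b) set) \<notin> (`) Inr ` edges B"
  proof
    assume "({Inl a, Inl b} :: ('a + 'b) set) \<in> (`) Inr ` edges B"
    then obtain e where "({Inl a, Inl b} :: ('a + 'b) set) = Inr ` e" by (rule imageE)
    then show False using Y by simp
  qed
  have 3: "({Inl a, Inl b} :: ('a + 'b) set) \<notin> {{Inl u, Inr v} | u v. u \<in> verts A \<and> v \<in> verts B}"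
  proof
    assume "({Inl a, Inl b} :: ('a + 'b) set) \<in> {{Inl u, Inr v} | u v. u \<in> verts A \<and> v \<in> verts B}"
    then obtain u v where "{Inl a, Inl b} = ({Inl u, Inr v} :: ('a + 'b) set)" by blast
    then show False using Z by simp
  qed
  show ?thesis unfolding adj_def edges_join Un_iff using 1 2 3 by blast
qed

lemma adj_join_rr: "adj (graph_join A B) (Inr a) (Inr b) \<longleftrightarrow> adj B a b"
proof -
  have X: "({Inr a, Inr b} :: ('a + 'b) set) = Inr ` e \<longleftrightarrow> e = {a, b}" for e :: "'b set"
  proof -
    have "{Inr a, Inr b} = (Inr ` {a, b} :: ('a + 'b) set)" by simp
    moreover have "(Inr ` {a, b} :: ('a + 'b) set) = Inr ` e \<longleftrightarrow> {a, b} = e"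
      by (rule inj_image_eq_iff) (simp add: inj_def)
    ultimately show ?thesis by auto
  qed
  have Y: "{Inr a, Inr b} \<noteq> (Inl ` e :: ('a + 'b) set)" for e :: "'a set"
  proof
    assume h: "{Inr a, Inr b} = (Inl ` e :: ('a + 'b) set)"
    have "(Inr a :: 'a + 'b) \<in> Inl ` e" by (subst h[symmetric]) simp
    then show False by blast
  qed
  have Z: "{Inr a, Inr b} \<noteq> ({Inl u, Inr v} :: ('a + 'b) set)" for u v
  proof
    assume h: "{Inr a, Inr b} = ({Inl u, Inr v} :: ('a + 'b) set)"
    have "(Inl u :: 'a + 'b) \<in> {Inr a, Inr b}" by (subst h) simp
    then show False by simp
  qed
  have 1: "({Inr a, Inr b} :: ('a + 'b) set) \<in> (`) Inr ` edges B \<longleftrightarrow> {a, b} \<in> edges B"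
  proof
    assume "({Inr a, Inr b} :: ('a + 'b) set) \<in> (`) Inr ` edges B"
    then obtain e where "({Inr a, Inr b} :: ('a + 'b) set) = Inr ` e" "e \<in> edges B" by (rule imageE)
    then show "{a, b} \<in> edges B" using X by simp
  next
    assume "{a, b} \<in> edges B"
    moreover have "{Inr a, Inr b} = (Inr ` {a, b} :: ('a + 'b) set)" by simp
    ultimately show "({Inr a, Inr b} :: ('a + 'b) set) \<in> (`) Inr ` edges B" by (rule rev_image_eqI)
  qed
  have 2: "({Inr a, Inr b} :: ('a + 'b) set) \<notin> (`) Inl ` edges A"
  proof
    assume "({Inr a, Inr b} :: ('a + 'b) set) \<in> (`) Inl ` edges A"
    then obtain e where "({Inr a, Inr b} :: ('a + 'b) set) = Inl ` e" by (rule imageE)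
    then show False using Y by simp
  qed
  have 3: "({Inr a, Inr b} :: ('a + 'b) set) \<notin> {{Inl u, Inr v} | u v. u \<in> verts A \<and> v \<in> verts B}"
  proof
    assume "({Inr a, Inr b} :: ('a + 'b) set) \<in> {{Inl u, Inr v} | u v. u \<in> verts A \<and> v \<in> verts B}"
    then obtain u v where "{Inr a, Inr b} = ({Inl u, Inr v} :: ('a + 'b) set)" by blast
    then show False using Z by simp
  qed
  show ?thesis unfolding adj_def edges_join Un_iff using 1 2 3 by blast
qed

lemma adj_join_lr: "adj (graph_join A B) (Inl a) (Inr b) \<longleftrightarrow> a \<in> verts A \<and> b \<in> verts B"
proof -
  have Y1: "{Inl a, Inr b} \<noteq> (Inl ` e :: ('a + 'b) set)" for e :: "'a set"
  proof
    assume h: "{Inl a, Inr b} = (Inl ` e :: ('a + 'b) set)"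
    have "(Inr b :: 'a + 'b) \<in> Inl ` e" by (subst h[symmetric]) simp
    then show False by blast
  qed
  have Y2: "{Inl a, Inr b} \<noteq> (Inr ` e :: ('a + 'b) set)" for e :: "'b set"
  proof
    assume h: "{Inl a, Inr b} = (Inr ` e :: ('a + 'b) set)"
    have "(Inl a :: 'a + 'b) \<in> Inr ` e" by (subst h[symmetric]) simp
    then show False by blast
  qed
  have Z: "{Inl a, Inr b} = ({Inl u, Inr v} :: ('a + 'b) set) \<longleftrightarrow> u = a \<and> v = b" for u v
  proof
    assume h: "{Inl a, Inr b} = ({Inl u, Inr v} :: ('a + 'b) set)"
    have "(Inl u :: 'a + 'b) \<in> {Inl a, Inr b}" "(Inr v :: 'a + 'b) \<in> {Inl a, Inr b}" by (subst h; simp)+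
    then show "u = a \<and> v = b" by simp
  qed simp
  have 1: "({Inl a, Inr b} :: ('a + 'b) set) \<notin> (`) Inl ` edges A"
  proof
    assume "({Inl a, Inr b} :: ('a + 'b) set) \<in> (`) Inl ` edges A"
    then obtain e where "({Inl a, Inr b} :: ('a + 'b) set) = Inl ` e" by (rule imageE)
    then show False using Y1 by simp
  qed
  have 2: "({Inl a, Inr b} :: ('a + 'b) set) \<notin> (`) Inr ` edges B"
  proof
    assume "({Inl a, Inr b} :: ('a + 'b) set) \<in> (`) Inr ` edges B"
    then obtain e where "({Inl a, Inr b} :: ('a + 'b) set) = Inr ` e" by (rule imageE)
    then show False using Y2 by simp
  qed
  have 3: "({Inl a, Inr b} :: ('a + 'b) set) \<in> {{Inl u, Inr v} | u v. u \<in> verts A \<and> v \<in> verts B} \<longleftrightarrow> a \<in> verts A \<and> b \<in> verts B"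
  proof
    assume "({Inl a, Inr b} :: ('a + 'b) set) \<in> {{Inl u, Inr v} | u v. u \<in> verts A \<and> v \<in> verts B}"
    then obtain u v where "{Inl a, Inr b} = ({Inl u, Inr v} :: ('a + 'b) set)" "u \<in> verts A" "v \<in> verts B" by blast
    then show "a \<in> verts A \<and> b \<in> verts B" using Z by simp
  next
    assume "a \<in> verts A \<and> b \<in> verts B"
    then show "({Inl a, Inr b} :: ('a + 'b) set) \<in> {{Inl u, Inr v} | u v. u \<in> verts A \<and> v \<in> verts B}" by blast
  qed
  show ?thesis unfolding adj_def edges_join Un_iff using 1 2 3 by blast
qed

lemma adj_join_rl: "adj (graph_join A B) (Inr b) (Inl a) \<longleftrightarrow> a \<in> verts A \<and> b \<in> verts B"
  using adj_join_lr[of A B a b] adj_sym[of "graph_join A B" "Inr b" "Inl a"] by simp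

lemma iso_randic:
  assumes "graph_iso G H" shows "randic0 a G = randic0 a H"
proof -
  obtain f where f: "bij_betw f (verts G) (verts H)"
    "\<forall>u\<in>verts G. \<forall>v\<in>verts G. adj G u v \<longleftrightarrow> adj H (f u) (f v)"
    using assms unfolding graph_iso_def by blast
  have deg: "degree G v = degree H (f v)" if v: "v \<in> verts G" for v
  proof -
    have "nbr H (f v) = f ` nbr G v"
    proof (intro set_eqI iffI)
      fix w assume w: "w \<in> nbr H (f v)"
      then have "w \<in> verts H" unfolding nbr_def by simp
      then obtain u where u: "u \<in> verts G" "w = f u" using f(1) by (metis bij_betw_imp_surj_on imageE)
      then have "adj G u v" using w f(2) v unfolding nbr_def by simp
      then show "w \<in> f ` nbr G v" using u unfolding nbr_def by blast
    next
      fix w assume "w \<in> f ` nbr G v"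
      then obtain u where u: "u \<in> verts G" "adj G u v" "w = f u" unfolding nbr_def by blast
      then have "adj H w (f v)" using f(2) v by simp
      moreover have "w \<in> verts H" using u f(1) by (metis bij_betw_apply)
      ultimately show "w \<in> nbr H (f v)" unfolding nbr_def by simp
    qed
    moreover have "inj_on f (nbr G v)" using f(1) unfolding bij_betw_def nbr_def
      by (metis (no_types, lifting) inj_on_subset mem_Collect_eq subsetI)
    ultimately show ?thesis unfolding degree_nbr by (simp add: card_image)
  qed
  have "randic0 a H = (\<Sum>v\<in>verts G. real (degree H (f v)) powr a)"
    unfolding randic0_def by (rule sum.reindex_bij_betw[OF f(1), symmetric])
  also have "\<dots> = randic0 a G" unfolding randic0_def using deg by simp
  finally show ?thesis by simp
qed

lemma card_Inl_Inr: "finite A \<Longrightarrow> finite B \<Longrightarrow> card (Inl ` A \<union> Inr ` B) = card A + card B"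
  by (subst card_Un_disjoint) (auto simp: card_image)

lemma card_ins_Inr: "finite A \<Longrightarrow> card (insert (Inr x) (Inl ` A)) = Suc (card A)"
  by (simp add: card_image image_iff)

lemma randic_join:
  fixes a :: real and k m :: nat
  assumes "1 \<le> k" "2 \<le> m"
  shows "randic0 a (graph_join (complete_graph k) (path_graph m)) =
    real k * (real k + real m - 1) powr a + 2 * (real k + 1) powr a + (real m - 2) * (real k + 2) powr a"
proof -
  let ?J = "graph_join (complete_graph k) (path_graph m)"
  let ?pn = "\<lambda>j. {j' \<in> {0..<m}. Suc j' = j \<or> Suc j = j'}"
  have vJ: "verts ?J = Inl ` {0..<k} \<union> Inr ` {0..<m}" by (simp add: verts_join)
  have nl: "nbr ?J (Inl i) = Inl ` ({0..<k} - {i}) \<union> Inr ` {0..<m}" if "i < k" for i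
  proof (intro set_eqI iffI)
    fix x assume "x \<in> nbr ?J (Inl i)"
    then show "x \<in> Inl ` ({0..<k} - {i}) \<union> Inr ` {0..<m}" unfolding nbr_def vJ
      by (auto simp: adj_join_ll adj_join_rl adj_complete)
  next
    fix x assume "x \<in> Inl ` ({0..<k} - {i}) \<union> Inr ` {0..<m}"
    then show "x \<in> nbr ?J (Inl i)" using that unfolding nbr_def vJ
      by (auto simp: adj_join_ll adj_join_rl adj_complete)
  qed
  have nr: "nbr ?J (Inr j) = Inl ` {0..<k} \<union> Inr ` ?pn j" if "j < m" for j
  proof (intro set_eqI iffI)
    fix x assume "x \<in> nbr ?J (Inr j)"
    then show "x \<in> Inl ` {0..<k} \<union> Inr ` ?pn j" unfolding nbr_def vJ
      by (auto simp: adj_join_rr adj_join_lr adj_path)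
  next
    fix x assume "x \<in> Inl ` {0..<k} \<union> Inr ` ?pn j"
    then show "x \<in> nbr ?J (Inr j)" using that unfolding nbr_def vJ
      by (auto simp: adj_join_rr adj_join_lr adj_path)
  qed
  have dl: "degree ?J (Inl i) = k + m - 1" if "i < k" for i
    unfolding degree_nbr nl[OF that] using that by (subst card_Inl_Inr) auto
  have pn0: "?pn 0 = {1}" using assms by auto
  have pnl: "?pn (m - 1) = {m - 2}" using assms by auto
  have pnm: "?pn j = {j - 1, j + 1}" if "0 < j" "j < m - 1" for j using that by auto
  define g where "g j = real (degree ?J (Inr j)) powr a" for j
  have g1: "g 0 = (real k + 1) powr a" "g (m - 1) = (real k + 1) powr a"
    unfolding g_def degree_nbr using nr[of 0] nr[of "m-1"] pn0 pnl assms
    by (auto simp: card_Inl_Inr card_ins_Inr add.commute)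
  have g2: "g j = (real k + 2) powr a" if "0 < j" "j < m - 1" for j
  proof -
    have "card (?pn j) = 2" using pnm[OF that] that by simp
    then show ?thesis unfolding g_def degree_nbr using nr[of j] that
      by (simp add: card_Inl_Inr add.commute)
  qed
  define r where "r = m - 2"
  have r: "m = Suc (Suc r)" using assms(2) unfolding r_def by simp
  have "(\<Sum>j\<in>{0..<m}. g j) = g 0 + (\<Sum>j\<in>{1..<Suc r}. g j) + g (m - 1)"
    unfolding r by (simp add: sum.atLeast_Suc_lessThan)
  also have "(\<Sum>j\<in>{1..<Suc r}. g j) = (\<Sum>j\<in>{1..<Suc r}. (real k + 2) powr a)"
    by (rule sum.cong[OF refl]) (rule g2; auto simp: r)
  finally have sr: "(\<Sum>j\<in>{0..<m}. g j) = 2 * (real k + 1) powr a + (real m - 2) * (real k + 2) powr a"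
    using g1 r by simp
  have "randic0 a ?J = (\<Sum>x\<in>Inl ` {0..<k}. real (degree ?J x) powr a) + (\<Sum>x\<in>Inr ` {0..<m}. real (degree ?J x) powr a)"
    unfolding randic0_def vJ by (rule sum.union_disjoint) auto
  also have "(\<Sum>x\<in>Inl ` {0..<k}. real (degree ?J x) powr a) = (\<Sum>i\<in>{0..<k}. real (degree ?J (Inl i)) powr a)"
    by (simp add: sum.reindex)
  also have "\<dots> = real k * (real k + real m - 1) powr a"
    using dl assms by simp
  also have "(\<Sum>x\<in>Inr ` {0..<m}. real (degree ?J x) powr a) = (\<Sum>j\<in>{0..<m}. g j)"
    unfolding g_def by (simp add: sum.reindex)
  finally show ?thesis using sr by simp
qed

lemma iso_from_inv:
  assumes "bij_betw g (verts H) (verts G)"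
    "\<forall>x\<in>verts H. \<forall>y\<in>verts H. adj H x y \<longleftrightarrow> adj G (g x) (g y)"
  shows "graph_iso G H"
  unfolding graph_iso_def
proof (intro exI conjI ballI)
  let ?f = "inv_into (verts H) g"
  show "bij_betw ?f (verts G) (verts H)" by (rule bij_betw_inv_into[OF assms(1)])
  have im: "verts G = g ` verts H" using assms(1) by (simp add: bij_betw_def)
  fix u v assume uv: "u \<in> verts G" "v \<in> verts G"
  have "g (?f u) = u" "g (?f v) = v" using uv im by (auto intro: f_inv_into_f)
  moreover have "?f u \<in> verts H" "?f v \<in> verts H" using uv im by (auto intro: inv_into_into)
  ultimately show "adj G u v \<longleftrightarrow> adj H (?f u) (?f v)" using assms(2) by metis
qed

lemma two_vertex_tree:
  assumes sG: "simple_graph G" and vD: "verts (del_verts G S') = {w, s}" and ws: "w \<noteq> s"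
    and a: "adj (del_verts G S') w s"
  shows "is_tree (del_verts G S')"
proof -
  let ?D = "del_verts G S'"
  have c: "(adj ?D)\<^sup>*\<^sup>* x y" if "x \<in> {w, s}" "y \<in> {w, s}" for x y
  proof -
    have "adj ?D s w" using a adj_sym[of ?D w s] by simp
    then show ?thesis using that a by auto
  qed
  have "\<not> is_cycle ?D cs" for cs
  proof
    assume "is_cycle ?D cs"
    then have "distinct cs" "set cs \<subseteq> {w, s}" "3 \<le> length cs" using vD unfolding is_cycle_def by auto
    then have "length cs \<le> card {w, s}" by (metis card_mono distinct_card finite.emptyI finite.insertI)
    moreover have "card {w, s} \<le> 2" by (simp add: card_insert_if)
    ultimately show False using \<open>3 \<le> length cs\<close> by simp
  qed
  then show ?thesis unfolding is_tree_def connected_graph_def acyclic_graph_def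
    using simple_del[OF sG] vD c by auto
qed

lemma inl_mem: "Inl i \<in> Inl ` A \<union> Inr ` B \<longleftrightarrow> i \<in> A" by auto
lemma inr_mem: "Inr j \<in> Inl ` A \<union> Inr ` B \<longleftrightarrow> j \<in> B" by auto

theorem mainTheorem1:
  fixes k n :: nat and \<alpha> :: real and G :: "'a graph"
  assumes "k \<ge> 1" and "n \<ge> 3" and "\<alpha> < 0" and "G \<in> T_class k n"
  shows "randic0 \<alpha> G \<ge> real k * (real n - 1) powr \<alpha> + 2 * real (k + 1) powr \<alpha>
            + (real n - real k - 2) * real (k + 2) powr \<alpha>
     \<and> (randic0 \<alpha> G = real k * (real n - 1) powr \<alpha> + 2 * real (k + 1) powr \<alpha>
            + (real n - real k - 2) * real (k + 2) powr \<alpha>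
         \<longleftrightarrow> graph_iso G (graph_join (complete_graph k) (path_graph (n - k))))"
proof -
  have qt: "quasi_tree k G" and cV: "card (verts G) = n" using assms(4) unfolding T_class_def by auto
  obtain S where SV: "S \<subset> verts G" and cS: "card S = k" and tr: "is_tree (del_verts G S)"
    using qt unfolding quasi_tree_def by blast
  have mn: "\<forall>S'. S' \<subset> verts G \<and> card S' = k - 1 \<longrightarrow> \<not> is_tree (del_verts G S')"
    using qt unfolding quasi_tree_def by blast
  have cG: "connected_graph G" using qt unfolding quasi_tree_def by blast
  have sG: "simple_graph G" using cG unfolding connected_graph_def by blast
  have finV: "finite (verts G)" using simple_finite[OF sG] .
  define T where "T = del_verts G S"
  define W where "W = verts G - S"
  define m where "m = n - k"
  have finS: "finite S" using finV SV by (meson finite_subset psubset_imp_subset)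
  have kn: "k < n" using psubset_card_mono[OF finV SV] cS cV by simp
  have cW: "card W = m" unfolding W_def m_def using card_Diff_subset[OF finS] SV cS cV by auto
  have finW: "finite W" unfolding W_def using finV by simp
  have vT: "verts T = W" unfolding T_def W_def by simp
  have adjT: "\<And>u v. adj T u v \<longleftrightarrow> adj G u v \<and> u \<notin> S \<and> v \<notin> S" unfolding T_def by (rule adj_del)
  have cT: "connected_graph T" and aT: "acyclic_graph T" using tr unfolding T_def is_tree_def by auto
  have sT: "simple_graph T" using cT unfolding connected_graph_def by blast
  have VSW: "verts G = S \<union> W" "S \<inter> W = {}" unfolding W_def using SV by auto
  have nbrV: "\<And>v. nbr G v \<subseteq> verts G - {v}" using nbr_self[OF sG] unfolding nbr_def by blast
  have m2: "2 \<le> m"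
  proof (rule ccontr)
    assume "\<not> 2 \<le> m"
    moreover have "W \<noteq> {}" using SV unfolding W_def by auto
    then have "m \<noteq> 0" using cW finW by auto
    ultimately have "card W = 1" using cW by simp
    then obtain w where Ww: "W = {w}" by (rule card_1_singletonE)
    have wV: "w \<in> verts G" "w \<notin> S" using Ww unfolding W_def by auto
    have "S \<noteq> {}" using cS assms(1) by auto
    then obtain s0 where "s0 \<in> S" by blast
    then have "s0 \<in> verts G" "w \<noteq> s0" using SV wV by auto
    then have "1 \<le> degree G w" using conn_degree_pos[OF cG wV(1)] by blast
    then have "nbr G w \<noteq> {}" unfolding degree_nbr by auto
    then obtain s where s: "s \<in> nbr G w" by blast
    have sS: "s \<in> S" "s \<noteq> w" using s nbrV[of w] VSW Ww by auto
    define S' where "S' = S - {s}"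
    have S'V: "S' \<subset> verts G" using SV unfolding S'_def by auto
    have cS': "card S' = k - 1" using cS sS finS unfolding S'_def by simp
    have vD: "verts (del_verts G S') = {w, s}" using VSW Ww sS unfolding S'_def by auto
    have "adj G s w" using s unfolding nbr_def by simp
    then have "adj (del_verts G S') w s" using adj_sym[of G s w] wV sS
      unfolding S'_def by (simp add: adj_del)
    then have "is_tree (del_verts G S')" using two_vertex_tree[OF sG vD] sS by metis
    then show False using mn S'V cS' by blast
  qed
  have degS: "degree G v \<le> n - 1" if "v \<in> verts G" for v
  proof -
    have "degree G v \<le> card (verts G - {v})" unfolding degree_nbr using nbrV finV by (simp add: card_mono)
    then show ?thesis using cV that by simp
  qed
  have degW: "degree G v \<le> k + degree T v" if v: "v \<in> W" for v
  proof -
    have "nbr G v \<subseteq> S \<union> nbr T v" using v nbrV[of v] unfolding nbr_def vT W_def adjT by auto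
    then have "degree G v \<le> card (S \<union> nbr T v)" unfolding degree_nbr
      using finS nbr_finite[OF sT] by (simp add: card_mono)
    also have "\<dots> \<le> card S + card (nbr T v)" by (rule card_Un_le)
    finally show ?thesis using cS by (simp add: degree_nbr)
  qed
  have degpos: "1 \<le> degree G v" if v: "v \<in> verts G" for v
  proof -
    have "\<exists>w\<in>verts G. w \<noteq> v"
    proof (rule ccontr)
      assume "\<not> ?thesis"
      then have "verts G \<subseteq> {v}" by auto
      then have "card (verts G) \<le> 1" using card_mono[of "{v}"] by fastforce
      then show False using cV assms(2) by simp
    qed
    then show ?thesis using conn_degree_pos[OF cG v] by blast
  qed
  have dT1: "1 \<le> degree T v" if v: "v \<in> W" for v
  proof -
    have "\<exists>w\<in>W. w \<noteq> v"
    proof (rule ccontr)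
      assume "\<not> ?thesis"
      then have "W \<subseteq> {v}" by auto
      then have "card W \<le> 1" using card_mono[of "{v}"] by fastforce
      then show False using cW m2 by simp
    qed
    then show ?thesis using conn_degree_pos[OF cT] v vT by auto
  qed
  have dsum: "(\<Sum>v\<in>W. degree T v) + 2 \<le> 2 * m"
    using degree_sum_acyclic[OF sT aT] vT cW m2 by fastforce

  define b where "b = real k"
  have b0: "0 < b" using assms(1) unfolding b_def by simp
  define c where "c = (b + 1) powr \<alpha> - (b + 2) powr \<alpha>"
  have c0: "0 < c" unfolding c_def using powr_less_mono2_neg[OF assms(3), of "b+1" "b+2"] b0 by simp
  define L where "L d = (b + 2) powr \<alpha> - (real d - 2) * c" for d :: nat
  define dg where "dg v = real (degree G v) powr \<alpha>" for v
  define A1 where "A1 = (\<Sum>v\<in>S. dg v - (real n - 1) powr \<alpha>)"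
  define A2 where "A2 = (\<Sum>v\<in>W. dg v - L (degree T v))"
  define A3 where "A3 = c * (2 * real m - 2 - (\<Sum>v\<in>W. real (degree T v)))"
  define B where "B = real k * (real n - 1) powr \<alpha> + 2 * real (k + 1) powr \<alpha>
            + (real n - real k - 2) * real (k + 2) powr \<alpha>"
  have t1: "dg v - (real n - 1) powr \<alpha> \<ge> 0" if "v \<in> S" for v
  proof -
    have v: "v \<in> verts G" using that SV by auto
    have "real (degree G v) \<le> real n - 1" using degS[OF v] kn by linarith
    then show ?thesis unfolding dg_def using powr_mono2'[of \<alpha> "real (degree G v)" "real n - 1"]
      assms(3) degpos[OF v] by simp
  qed
  have t2a: "dg v \<ge> (b + real (degree T v)) powr \<alpha>" if "v \<in> W" for v
  proof -
    have v: "v \<in> verts G" using that unfolding W_def by auto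
    have "real (degree G v) \<le> b + real (degree T v)" using degW[OF that] unfolding b_def by linarith
    then show ?thesis unfolding dg_def using powr_mono2'[of \<alpha> "real (degree G v)"]
      assms(3) degpos[OF v] by simp
  qed
  have t2b: "(b + real (degree T v)) powr \<alpha> \<ge> L (degree T v)" if "v \<in> W" for v
    unfolding L_def c_def using secant(1)[OF assms(3) b0 dT1[OF that]] .
  have t2: "dg v - L (degree T v) \<ge> 0" if "v \<in> W" for v using t2a[OF that] t2b[OF that] by linarith
  have A1nn: "A1 \<ge> 0" unfolding A1_def using t1 by (simp add: sum_nonneg)
  have A2nn: "A2 \<ge> 0" unfolding A2_def using t2 by (simp add: sum_nonneg)
  have "(\<Sum>v\<in>W. real (degree T v)) + 2 \<le> 2 * real m"
    using dsum by (simp add: of_nat_sum[symmetric] del: of_nat_sum)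
  then have A3nn: "A3 \<ge> 0" unfolding A3_def using c0 by simp
  have RS: "randic0 \<alpha> G = (\<Sum>v\<in>S. dg v) + (\<Sum>v\<in>W. dg v)"
    unfolding randic0_def dg_def VSW(1) using finS finW VSW(2) by (rule sum.union_disjoint)
  have s1: "A1 = (\<Sum>v\<in>S. dg v) - real k * (real n - 1) powr \<alpha>"
    unfolding A1_def using cS by (simp add: sum_subtractf)
  have s2: "A2 = (\<Sum>v\<in>W. dg v) - (real m * (b + 2) powr \<alpha> + 2 * real m * c - c * (\<Sum>v\<in>W. real (degree T v)))"
  proof -
    have "(\<Sum>v\<in>W. L (degree T v)) = (\<Sum>v\<in>W. ((b + 2) powr \<alpha> + 2 * c) - c * real (degree T v))"
      unfolding L_def by (rule sum.cong) (auto simp: algebra_simps)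
    also have "\<dots> = real m * ((b + 2) powr \<alpha> + 2 * c) - c * (\<Sum>v\<in>W. real (degree T v))"
      using cW by (simp add: sum_subtractf sum_distrib_left)
    finally show ?thesis unfolding A2_def by (simp add: sum_subtractf algebra_simps)
  qed
  have nk: "real n - real k = real m" unfolding m_def using kn by simp
  have RB: "randic0 \<alpha> G = B + A1 + A2 + A3"
  proof -
    have "B = real k * (real n - 1) powr \<alpha> + 2 * (b + 1) powr \<alpha> + (real m - 2) * (b + 2) powr \<alpha>"
      unfolding B_def b_def using nk by (simp add: add.commute)
    then show ?thesis unfolding RS s1 s2 A3_def c_def by (simp add: algebra_simps)
  qed
  have ineq: "B \<le> randic0 \<alpha> G" using RB A1nn A2nn A3nn by linarith

  have eqB: "B = real k * (real k + real m - 1) powr \<alpha> + 2 * (real k + 1) powr \<alpha> + (real m - 2) * (real k + 2) powr \<alpha>"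
  proof -
    have e1: "real k + real m - 1 = real n - 1" using nk by simp
    have e2: "real n - real k - 2 = real m - 2" using nk by simp
    have e3: "real (k + 1) = real k + 1" "real (k + 2) = real k + 2" by simp_all
    show ?thesis unfolding B_def e1 e2 e3 ..
  qed
  have iff: "randic0 \<alpha> G = B \<longleftrightarrow> graph_iso G (graph_join (complete_graph k) (path_graph m))"
  proof
    assume iso: "graph_iso G (graph_join (complete_graph k) (path_graph m))"
    show "randic0 \<alpha> G = B" unfolding iso_randic[OF iso] randic_join[OF assms(1) m2] eqB ..
  next
    assume "randic0 \<alpha> G = B"
    then have "A1 + A2 + A3 = 0" using RB by simp
    then have z: "A1 = 0" "A2 = 0" using A1nn A2nn A3nn by linarith+
    have degS': "degree G v = n - 1" if v: "v \<in> S" for v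
    proof (rule ccontr)
      have vV: "v \<in> verts G" using v SV by auto
      assume "degree G v \<noteq> n - 1"
      then have "real (degree G v) < real n - 1" using degS[OF vV] kn by linarith
      then have "(real n - 1) powr \<alpha> < dg v" unfolding dg_def
        using powr_less_mono2_neg[OF assms(3)] degpos[OF vV] by simp
      moreover have "dg v - (real n - 1) powr \<alpha> = 0"
        using z(1) t1 finS v unfolding A1_def by (simp add: sum_nonneg_eq_0_iff)
      ultimately show False by simp
    qed
    have dT2: "degree T v \<le> 2" if v: "v \<in> W" for v
    proof -
      have "dg v - L (degree T v) = 0"
        using z(2) t2 finW v unfolding A2_def by (simp add: sum_nonneg_eq_0_iff)
      then have "(b + real (degree T v)) powr \<alpha> = L (degree T v)" using t2a[OF v] t2b[OF v] by linarith
      then show ?thesis using secant(2)[OF assms(3) b0 dT1[OF v]] unfolding L_def c_def by blast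
    qed
    have sfull: "nbr G v = verts G - {v}" if v: "v \<in> S" for v
    proof -
      have vV: "v \<in> verts G" using v SV by auto
      have "card (nbr G v) = card (verts G - {v})" using degS'[OF v] cV vV finV
        unfolding degree_nbr by simp
      then show ?thesis using nbrV[of v] finV by (simp add: card_subset_eq)
    qed
    have adjS: "adj G u v" if "u \<in> S" "v \<in> verts G" "u \<noteq> v" for u v
    proof -
      have "v \<in> nbr G u" using sfull[OF that(1)] that by simp
      then show ?thesis unfolding nbr_def using adj_sym[of G v u] by simp
    qed
    obtain w where w: "w \<in> W" using m2 cW by fastforce
    have "nbr T w \<noteq> {}" using dT1[OF w] unfolding degree_nbr by auto
    then obtain u where "adj T u w" unfolding nbr_def by blast
    from max_gpath[OF sT this] obtain ps where ps: "gpath T ps" "2 \<le> length ps"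
      "\<forall>qs. gpath T qs \<longrightarrow> length qs \<le> length ps" by blast
    have setps: "set ps = W" using path_cover[OF cT _ ps] dT2 vT by simp
    have lps: "length ps = m" using ps(1) setps cW unfolding gpath_def by (metis distinct_card)
    have dps: "distinct ps" using ps(1) unfolding gpath_def by simp
    have padj: "adj G (ps!i) (ps!j) \<longleftrightarrow> (Suc i = j \<or> Suc j = i)" if "i < m" "j < m" for i j
    proof -
      have "ps!i \<in> W" "ps!j \<in> W" using that lps setps nth_mem[of i ps] nth_mem[of j ps] by auto
      then have "adj G (ps!i) (ps!j) \<longleftrightarrow> adj T (ps!i) (ps!j)" unfolding adjT W_def by simp
      then show ?thesis using gpath_adj_iff[OF sT aT ps(1)] that lps by simp
    qed
    obtain sb where sb: "bij_betw sb {0..<k} S" using ex_bij_betw_nat_finite[OF finS] cS by auto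
    define g where "g = case_sum sb (\<lambda>j. ps ! j)"
    let ?J = "graph_join (complete_graph k) (path_graph m)"
    have vJ: "verts ?J = Inl ` {0..<k} \<union> Inr ` {0..<m}" by (simp add: verts_join)
    have sbS: "sb i \<in> S" if "i < k" for i using sb that by (auto dest: bij_betw_apply)
    have psW: "ps ! j \<in> W" if "j < m" for j using setps lps that nth_mem[of j ps] by auto
    have sbinj: "sb i = sb j \<longleftrightarrow> i = j" if "i < k" "j < k" for i j
      using sb that unfolding bij_betw_def inj_on_def by auto
    have psinj: "ps ! i = ps ! j \<longleftrightarrow> i = j" if "i < m" "j < m" for i j
      using dps that lps by (simp add: nth_eq_iff_index_eq)
    have bij: "bij_betw g (verts ?J) (verts G)"
      unfolding bij_betw_def
    proof
      show "inj_on g (verts ?J)"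
      proof (rule inj_onI)
        fix x y assume xy: "x \<in> verts ?J" "y \<in> verts ?J" "g x = g y"
        show "x = y"
        proof (cases x; cases y)
          fix i j assume h: "x = Inl i" "y = Inl j"
          have ij: "i < k" "j < k" using xy(1,2) unfolding h vJ inl_mem inr_mem by simp_all
          have "sb i = sb j" using xy(3) unfolding h g_def by simp
          then show "x = y" using sbinj[OF ij] h by simp
        next
          fix i j assume h: "x = Inl i" "y = Inr j"
          have ij: "i < k" "j < m" using xy(1,2) unfolding h vJ inl_mem inr_mem by simp_all
          have "sb i = ps ! j" using xy(3) unfolding h g_def by simp
          then have "sb i \<in> S \<inter> W" using sbS[OF ij(1)] psW[OF ij(2)] by simp
          then show "x = y" using VSW(2) by simp
        next
          fix i j assume h: "x = Inr i" "y = Inl j"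
          have ij: "i < m" "j < k" using xy(1,2) unfolding h vJ inl_mem inr_mem by simp_all
          have "ps ! i = sb j" using xy(3) unfolding h g_def by simp
          then have "sb j \<in> S \<inter> W" using sbS[OF ij(2)] psW[OF ij(1)] by simp
          then show "x = y" using VSW(2) by simp
        next
          fix i j assume h: "x = Inr i" "y = Inr j"
          have ij: "i < m" "j < m" using xy(1,2) unfolding h vJ inl_mem inr_mem by simp_all
          have "ps ! i = ps ! j" using xy(3) unfolding h g_def by simp
          then show "x = y" using psinj[OF ij] h by simp
        qed
      qed
      have "g ` verts ?J = sb ` {0..<k} \<union> (\<lambda>j. ps ! j) ` {0..<m}" unfolding vJ g_def image_Un image_image by simp
      also have "sb ` {0..<k} = S" using sb by (simp add: bij_betw_def)
      also have "(\<lambda>j. ps ! j) ` {0..<m} = set ps" using lps by (auto simp: set_conv_nth)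
      finally show "g ` verts ?J = verts G" using setps VSW(1) by simp
    qed
    have adjg: "\<forall>x\<in>verts ?J. \<forall>y\<in>verts ?J. adj ?J x y \<longleftrightarrow> adj G (g x) (g y)"
    proof (intro ballI)
      fix x y assume xy: "x \<in> verts ?J" "y \<in> verts ?J"
      show "adj ?J x y \<longleftrightarrow> adj G (g x) (g y)"
      proof (cases x; cases y)
        fix i j assume xy': "x = Inl i" "y = Inl j"
        have ij: "i < k" "j < k" using xy unfolding xy' vJ inl_mem inr_mem by simp_all
        have si: "sb i \<in> S" "sb j \<in> S" using sbS ij by auto
        have svj: "sb j \<in> verts G" using si SV by auto
        have "adj G (sb i) (sb j) \<longleftrightarrow> i \<noteq> j"
        proof
          assume "adj G (sb i) (sb j)"
          then have "sb i \<noteq> sb j" by (rule simple_adj(3)[OF sG])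
          then show "i \<noteq> j" by auto
        next
          assume "i \<noteq> j"
          then have "sb i \<noteq> sb j" using sbinj[OF ij] by simp
          then show "adj G (sb i) (sb j)" using adjS[OF si(1) svj] by simp
        qed
        then show ?thesis unfolding xy' g_def using ij by (simp add: adj_join_ll adj_complete)
      next
        fix i j assume xy': "x = Inl i" "y = Inr j"
        have ij: "i < k" "j < m" using xy unfolding xy' vJ inl_mem inr_mem by simp_all
        have "ps ! j \<in> verts G" "sb i \<noteq> ps ! j" using psW[OF ij(2)] sbS[OF ij(1)] VSW by auto
        then have "adj G (sb i) (ps ! j)" using adjS[OF sbS[OF ij(1)]] by simp
        then show ?thesis unfolding xy' g_def using ij by (simp add: adj_join_lr)
      next
        fix i j assume xy': "x = Inr i" "y = Inl j"
        have ij: "i < m" "j < k" using xy unfolding xy' vJ inl_mem inr_mem by simp_all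
        have "ps ! i \<in> verts G" "sb j \<noteq> ps ! i" using psW[OF ij(1)] sbS[OF ij(2)] VSW by auto
        then have "adj G (sb j) (ps ! i)" using adjS[OF sbS[OF ij(2)]] by simp
        then have "adj G (ps ! i) (sb j)" using adj_sym[of G "sb j" "ps ! i"] by simp
        then show ?thesis unfolding xy' g_def using ij by (simp add: adj_join_rl)
      next
        fix i j assume xy': "x = Inr i" "y = Inr j"
        have ij: "i < m" "j < m" using xy unfolding xy' vJ inl_mem inr_mem by simp_all
        show ?thesis unfolding xy' g_def using padj[OF ij] ij by (simp add: adj_join_rr adj_path)
      qed
    qed
    show "graph_iso G ?J" by (rule iso_from_inv[OF bij adjg])
  qed
  show ?thesis using ineq iff unfolding B_def m_def by simp
qed

end
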